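(* For every $x\in X(l_1,\dots,l_n,l_\infty)$ and every $g\in J_n$, the border thickness of $gx$ equals the border thickness of $x$.
   Context: Cactus group: $J_n$ is the group generated by $s_{p,q}$, $1\le p<q\le n$, subject to the relations $s_{p,q}^2=e$; $s_{p,q}s_{p',q'}=s_{p',q'}s_{p,q}$ if $[p,q]$ and $[p',q']$ are disjoint; $s_{p,q}s_{p',q'}s_{p,q}=s_{p+q-q',p+q-p'}$ if $p\le p'<q'\le q$. Arc diagrams: fix nonnegative integers $l_1,\dots,l_n,l_\infty$. On the boundary circle of a closed disc place $n+1$ marked positions: position $0$ (occupied by $z_\infty$) and positions $1,\dots,n$ following it clockwise. An arc diagram is a bijective assignment of labels $z_1,\dots,z_n$ to positions $1,\dots,n$ together with a finite collection of simple arcs in the disc, pairwise disjoint except at endpoints, each joining two distinct marked points, such that $z_j$ is an endpoint of exactly $l_j$ arcs ($j\in\{1,\dots,n,\infty\}$; $l_j$ is the valence). Parallel arcs are allowed; diagrams are up to isotopy, equivalently determined by the labelling and the number of arcs between each pair of marked points. $X(l_1,\dots,l_n,l_\infty)$ is the set of such diagrams. Action: $s_{p,q}$ ($1\le p<q\le n$) acts by cutting off positions $p,\dots,q$ with a chord $\ell$ (arcs isotoped to cross $\ell$ at most once), reflecting that region by the reflection reversing $\ell$ (label at position $p+t$ goes to position $q-t$, crossing points on $\ell$ reversed), leaving the rest unchanged and reconnecting arcs at $\ell$. Words act right to left; this is an action of $J_n$. Border thickness: the minimum, over the $n+1$ cyclically adjacent pairs of positions $(0,1),(1,2),\dots,(n-1,n),(n,0)$,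 of the number of arcs joining the two points of the pair. *)

theory Defs
  imports Main
begin

text \<open>Positions on the boundary circle are 0,1,...,n (0 carries z_infinity).
  A diagram is a pair (sigma, A): sigma pos = j means label z_j sits at position pos
  (pos in 1..n), and A i j is the number of arcs joining positions i and j.
  Valences: l j for z_j (j in 1..n), linf for z_infinity.\<close>

type_synonym diagram = "(nat \<Rightarrow> nat) \<times> (nat \<Rightarrow> nat \<Rightarrow> nat)"

definition arc_diagrams :: "nat \<Rightarrow> (nat \<Rightarrow> nat) \<Rightarrow> nat \<Rightarrow> diagram set" where
  "arc_diagrams n l linf = {(\<sigma>, A).
     bij_betw \<sigma> {1..n} {1..n} \<and> (\<forall>i. i \<notin> {1..n} \<longrightarrow> \<sigma> i = i) \<and>
     (\<forall>i j. A i j = A j i) \<and> (\<forall>i. A i i = 0) \<and> (\<forall>i j. n < i \<longrightarrow> A i j = 0) \<and>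
     (\<forall>a b c d. a < b \<and> b < c \<and> c < d \<longrightarrow> A a c = 0 \<or> A b d = 0) \<and>
     (\<forall>i\<in>{1..n}. (\<Sum>j\<le>n. A i j) = l (\<sigma> i)) \<and>
     (\<Sum>j\<le>n. A 0 j) = linf}"

definition inside :: "nat \<Rightarrow> nat \<Rightarrow> nat \<Rightarrow> bool" where
  "inside p q i \<longleftrightarrow> p \<le> i \<and> i \<le> q"

definition refl_pos :: "nat \<Rightarrow> nat \<Rightarrow> nat \<Rightarrow> nat" where
  "refl_pos p q i = p + q - i"

text \<open>Inside endpoints of arcs crossing the chord, in their order along the chord
  (starting from the end of the chord between positions p-1 and p).\<close>
definition inner_seq :: "nat \<Rightarrow> nat \<Rightarrow> nat \<Rightarrow> (nat \<Rightarrow> nat \<Rightarrow> nat) \<Rightarrow> nat list" where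
  "inner_seq n p q A =
     concat (map (\<lambda>i. replicate (\<Sum>k\<in>{0..n} - {p..q}. A i k) i) [p..<Suc q])"

text \<open>Outside endpoints of arcs crossing the chord, in the same order along the chord:
  positions p-1, ..., 0, n, ..., q+1.\<close>
definition outer_seq :: "nat \<Rightarrow> nat \<Rightarrow> nat \<Rightarrow> (nat \<Rightarrow> nat \<Rightarrow> nat) \<Rightarrow> nat list" where
  "outer_seq n p q A =
     concat (map (\<lambda>k. replicate (\<Sum>i\<in>{p..q}. A k i) k) (rev [0..<p] @ rev [Suc q..<Suc n]))"

text \<open>After reflecting the cut-off region, the crossing points on the chord are reversed:
  the j-th crossing point keeps its outside half and receives the reflected inside
  half of the (m+1-j)-th crossing point.\<close>
definition new_cross :: "nat \<Rightarrow> nat \<Rightarrow> nat \<Rightarrow> (nat \<Rightarrow> nat \<Rightarrow> nat) \<Rightarrow> (nat \<times> nat) list" where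
  "new_cross n p q A =
     zip (outer_seq n p q A) (rev (map (refl_pos p q) (inner_seq n p q A)))"

definition cross_count :: "nat \<Rightarrow> nat \<Rightarrow> nat \<Rightarrow> (nat \<Rightarrow> nat \<Rightarrow> nat) \<Rightarrow> nat \<Rightarrow> nat \<Rightarrow> nat" where
  "cross_count n p q A k i = length (filter (\<lambda>pr. pr = (k, i)) (new_cross n p q A))"

definition act_s :: "nat \<Rightarrow> nat \<times> nat \<Rightarrow> diagram \<Rightarrow> diagram" where
  "act_s n pq x = (case pq of (p, q) \<Rightarrow> case x of (\<sigma>, A) \<Rightarrow>
     ((\<lambda>i. if inside p q i then \<sigma> (refl_pos p q i) else \<sigma> i),
      (\<lambda>i j. if inside p q i \<and> inside p q j then A (refl_pos p q i) (refl_pos p q j)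
             else if \<not> inside p q i \<and> \<not> inside p q j then A i j
             else if inside p q i then cross_count n p q A j i
             else cross_count n p q A i j)))"

definition act_word :: "nat \<Rightarrow> (nat \<times> nat) list \<Rightarrow> diagram \<Rightarrow> diagram" where
  "act_word n ws x = foldr (act_s n) ws x"

definition cactus_word :: "nat \<Rightarrow> (nat \<times> nat) list \<Rightarrow> bool" where
  "cactus_word n ws \<longleftrightarrow> (\<forall>(p, q)\<in>set ws. 1 \<le> p \<and> p < q \<and> q \<le> n)"

definition border_thickness :: "nat \<Rightarrow> diagram \<Rightarrow> nat" where
  "border_thickness n x = (case x of (\<sigma>, A) \<Rightarrow> Min ({A i (Suc i) | i. i < n} \<union> {A n 0}))"

end

theory Submission
  imports Defs
begin


definition Xc :: "nat \<Rightarrow> nat \<Rightarrow> nat \<Rightarrow> nat \<Rightarrow> bool" where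
  "Xc u v x y \<longleftrightarrow> (min u v < min x y \<and> min x y < max u v \<and> max u v < max x y) \<or>
                   (min x y < min u v \<and> min u v < max x y \<and> max x y < max u v)"

definition rk :: "nat \<Rightarrow> nat \<Rightarrow> nat \<Rightarrow> nat" where
  "rk n p k = (if k < p then p - 1 - k else p + n - k)"

lemma AX1: "p \<le> q \<Longrightarrow> inside p q u \<Longrightarrow> inside p q v \<Longrightarrow> inside p q x \<Longrightarrow> inside p q y \<Longrightarrow> Xc u v x y
  \<Longrightarrow> Xc (refl_pos p q u) (refl_pos p q v) (refl_pos p q x) (refl_pos p q y)"
  unfolding Xc_def inside_def refl_pos_def min_def max_def by (simp split: if_splits; arith)

lemma AX2: "inside p q u \<Longrightarrow> inside p q v \<Longrightarrow> \<not> inside p q x \<Longrightarrow> \<not> inside p q y \<Longrightarrow> Xc u v x y \<Longrightarrow> False"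
  unfolding Xc_def inside_def min_def max_def by (simp split: if_splits; arith)

lemma AX3: "inside p q u \<Longrightarrow> inside p q v \<Longrightarrow> \<not> inside p q x \<Longrightarrow> inside p q y \<Longrightarrow> \<not> inside p q k \<Longrightarrow> Xc u v x y
  \<Longrightarrow> Xc (refl_pos p q u) (refl_pos p q v) (refl_pos p q y) k"
  unfolding Xc_def inside_def refl_pos_def min_def max_def by (simp split: if_splits; arith)

lemma AX4: "\<not> inside p q u \<Longrightarrow> \<not> inside p q v \<Longrightarrow> \<not> inside p q x \<Longrightarrow> inside p q y \<Longrightarrow> inside p q i \<Longrightarrow> Xc u v x y
  \<Longrightarrow> Xc u v x i"
  unfolding Xc_def inside_def min_def max_def by (simp split: if_splits; arith)

lemma AX5: "1 \<le> p \<Longrightarrow> p \<le> q \<Longrightarrow> q \<le> n \<Longrightarrow> \<not> inside p q k \<Longrightarrow> \<not> inside p q k' \<Longrightarrow> inside p q j \<Longrightarrow> inside p q j'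
  \<Longrightarrow> k \<le> n \<Longrightarrow> k' \<le> n \<Longrightarrow> rk n p k \<le> rk n p k' \<Longrightarrow> j \<le> j' \<Longrightarrow> Xc k j k' j' \<Longrightarrow> False"
  unfolding Xc_def inside_def rk_def min_def max_def by (simp split: if_splits; arith)

lemma AX6: "1 \<le> p \<Longrightarrow> p < i \<Longrightarrow> i \<le> q \<Longrightarrow> \<not> inside p q k \<Longrightarrow> k \<noteq> p - 1 \<Longrightarrow> Xc (p - 1) i p k"
  unfolding Xc_def inside_def min_def max_def by (simp split: if_splits; arith)

lemma AX7: "1 \<le> p \<Longrightarrow> p \<le> i \<Longrightarrow> i < q \<Longrightarrow> q \<le> n \<Longrightarrow> \<not> inside p q k \<Longrightarrow> k \<le> n \<Longrightarrow> 
   k \<noteq> (if q < n then Suc q else 0) \<Longrightarrow> Xc (if q < n then Suc q else 0) i q k"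
  unfolding Xc_def inside_def min_def max_def by (simp split: if_splits; arith)



definition SYM :: "(nat \<Rightarrow> nat \<Rightarrow> nat) \<Rightarrow> bool" where
  "SYM A \<longleftrightarrow> (\<forall>i j. A i j = A j i)"
definition NC :: "(nat \<Rightarrow> nat \<Rightarrow> nat) \<Rightarrow> bool" where
  "NC A \<longleftrightarrow> (\<forall>a b c d. a < b \<and> b < c \<and> c < d \<longrightarrow> A a c = 0 \<or> A b d = 0)"

lemma NCX:
  assumes "SYM A" "NC A" "Xc u v x y" shows "A u v = 0 \<or> A x y = 0"
proof -
  have s: "A u v = A (min u v) (max u v)" "A x y = A (min x y) (max x y)"
    using assms(1) unfolding SYM_def min_def max_def by auto
  show ?thesis using assms(3) unfolding Xc_def
  proof
    assume "min u v < min x y \<and> min x y < max u v \<and> max u v < max x y"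
    then show ?thesis using assms(2) s unfolding NC_def by metis
  next
    assume "min x y < min u v \<and> min u v < max x y \<and> max x y < max u v"
    then show ?thesis using assms(2) s unfolding NC_def by metis
  qed
qed

lemma Xc_sym1: "Xc u v x y = Xc v u x y" unfolding Xc_def by (simp add: min.commute max.commute)
lemma Xc_sym2: "Xc u v x y = Xc u v y x" unfolding Xc_def by (simp add: min.commute max.commute)
lemma Xc_sym3: "Xc u v x y = Xc x y u v" unfolding Xc_def by auto

lemma cnt0: "x \<notin> set xs \<or> y \<notin> set ys \<Longrightarrow> length (filter (\<lambda>pr. pr = (x, y)) (zip xs ys)) = 0"
  by (auto simp: filter_empty_conv dest: set_zip_leftD set_zip_rightD)

lemma cntZ1: "x \<notin> set r1 \<Longrightarrow> y \<notin> set r2 \<Longrightarrow>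
  length (filter (\<lambda>pr. pr = (x, y)) (zip (replicate a x @ r1) (replicate b y @ r2))) = min a b"
proof (induction a arbitrary: b)
  case 0 then show ?case using cnt0[of x r1 y] by simp
next
  case (Suc a) then show ?case
  proof (cases b)
    case 0 then show ?thesis using Suc.prems cnt0[of x "replicate (Suc a) x @ r1" y r2] by simp
  next
    case (Suc b') then show ?thesis using Suc.IH[of b'] Suc.prems by simp
  qed
qed

lemma cntZ2: assumes "x \<notin> set r1" "y \<notin> set r2" "length (r1 @ replicate a x) = length (r2 @ replicate b y)"
  shows "length (filter (\<lambda>pr. pr = (x, y)) (zip (r1 @ replicate a x) (r2 @ replicate b y))) = min a b"
proof -
  have "zip (r1 @ replicate a x) (r2 @ replicate b y) = rev (zip (rev (r1 @ replicate a x)) (rev (r2 @ replicate b y)))"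
    by (metis zip_rev[OF assms(3)] rev_rev_ident)
  then have "length (filter (\<lambda>pr. pr = (x, y)) (zip (r1 @ replicate a x) (r2 @ replicate b y))) =
     length (filter (\<lambda>pr. pr = (x, y)) (zip (replicate a x @ rev r1) (replicate b y @ rev r2)))"
    by (simp add: rev_filter[symmetric])
  also have "\<dots> = min a b" using cntZ1[of x "rev r1" y "rev r2" a b] assms by simp
  finally show ?thesis .
qed

lemma sw_concat_rep: "(\<And>x. R x x) \<Longrightarrow> sorted_wrt R L \<Longrightarrow> sorted_wrt R (concat (map (\<lambda>k. replicate (c k) k) L))"
proof (induction L)
  case Nil then show ?case by simp
next
  case (Cons a L)
  have "sorted_wrt R (replicate (c a) a)" using Cons.prems(1)
    by (simp add: sorted_wrt_iff_nth_less)
  then show ?case using Cons by (auto simp: sorted_wrt_append)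
qed

lemma set_concat_rep: "set (concat (map (\<lambda>k. replicate (c k) k) L)) = {k \<in> set L. c k \<noteq> 0}"
  by auto

lemma len_concat_rep: "length (concat (map (\<lambda>k. replicate (c k) k) L)) = sum_list (map c L)"
  by (induction L) auto



definition actA :: "nat \<Rightarrow> nat \<Rightarrow> nat \<Rightarrow> (nat \<Rightarrow> nat \<Rightarrow> nat) \<Rightarrow> nat \<Rightarrow> nat \<Rightarrow> nat" where
  "actA n p q A = (\<lambda>i j. if inside p q i \<and> inside p q j then A (refl_pos p q i) (refl_pos p q j)
             else if \<not> inside p q i \<and> \<not> inside p q j then A i j
             else if inside p q i then cross_count n p q A j i
             else cross_count n p q A i j)"

lemma act_s_snd: "snd (act_s n (p, q) x) = actA n p q (snd x)"
  by (cases x) (simp add: act_s_def actA_def)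

context
  fixes n p q :: nat and A :: "nat \<Rightarrow> nat \<Rightarrow> nat"
  assumes p1: "1 \<le> p" and pq: "p < q" and qn: "q \<le> n"
begin

abbreviation "ca k \<equiv> \<Sum>i\<in>{p..q}. A k i"
abbreviation "cb i \<equiv> \<Sum>k\<in>{0..n} - {p..q}. A i k"
abbreviation "Lst \<equiv> rev [0..<p] @ rev [Suc q..<Suc n]"
abbreviation "zz \<equiv> (if q < n then Suc q else 0)"

lemma O_def': "outer_seq n p q A = concat (map (\<lambda>k. replicate (ca k) k) Lst)"
  by (simp add: outer_seq_def)
lemma I_def': "inner_seq n p q A = concat (map (\<lambda>i. replicate (cb i) i) [p..<Suc q])"
  by (simp add: inner_seq_def)

lemma set_Lst: "set Lst = {0..n} - {p..q}" using pq qn by auto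
lemma dist_Lst: "distinct Lst" using pq qn by auto

lemma len_O: "length (outer_seq n p q A) = (\<Sum>k\<in>{0..n} - {p..q}. ca k)"
  unfolding O_def' len_concat_rep using sum_list_distinct_conv_sum_set[OF dist_Lst, of ca] set_Lst
  by simp
lemma len_I: "length (inner_seq n p q A) = (\<Sum>i\<in>{p..q}. cb i)"
proof -
  have d: "distinct [p..<Suc q]" by simp
  have "sum_list (map cb [p..<Suc q]) = sum cb (set [p..<Suc q])" by (rule sum_list_distinct_conv_sum_set[OF d])
  moreover have "set [p..<Suc q] = {p..q}" by auto
  ultimately show ?thesis unfolding I_def' len_concat_rep by (simp only: set_upt)
qed

lemma len_ON: assumes "SYM A"
  shows "length (outer_seq n p q A) = length (rev (map (refl_pos p q) (inner_seq n p q A)))"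
proof -
  have "(\<Sum>k\<in>{0..n} - {p..q}. ca k) = (\<Sum>i\<in>{p..q}. \<Sum>k\<in>{0..n} - {p..q}. A k i)"
    by (rule sum.swap)
  also have "\<dots> = (\<Sum>i\<in>{p..q}. cb i)" using assms by (simp add: SYM_def)
  finally show ?thesis by (simp add: len_O len_I)
qed

lemma O_first: "\<exists>O1. outer_seq n p q A = replicate (ca (p - 1)) (p - 1) @ O1 \<and> p - 1 \<notin> set O1"
proof -
  obtain p' where pp: "p = Suc p'" using p1 by (cases p) auto
  have "Lst = p' # (rev [0..<p'] @ rev [Suc q..<Suc n])" using pp by simp
  then have "outer_seq n p q A = replicate (ca p') p' @ concat (map (\<lambda>k. replicate (ca k) k) (rev [0..<p'] @ rev [Suc q..<Suc n]))"
    unfolding O_def' by simp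
  moreover have "p' \<notin> set (concat (map (\<lambda>k. replicate (ca k) k) (rev [0..<p'] @ rev [Suc q..<Suc n])))"
    unfolding set_concat_rep using pp pq by auto
  ultimately show ?thesis using pp by auto
qed

lemma O_last: "\<exists>O2. outer_seq n p q A = O2 @ replicate (ca zz) zz \<and> zz \<notin> set O2"
proof -
  have "\<exists>L1. Lst = L1 @ [zz] \<and> zz \<notin> set L1"
  proof (cases "q < n")
    case True
    have "[Suc q..<Suc n] = Suc q # [Suc (Suc q)..<Suc n]" using True by (simp add: upt_conv_Cons)
    then have "Lst = (rev [0..<p] @ rev [Suc (Suc q)..<Suc n]) @ [Suc q]" by simp
    then show ?thesis using True pq by (intro exI[of _ "rev [0..<p] @ rev [Suc (Suc q)..<Suc n]"]) auto
  next
    case False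
    have "[0..<p] = 0 # [1..<p]" using p1 by (simp add: upt_conv_Cons)
    then have "Lst = rev [1..<p] @ [0]" using False qn by simp
    then show ?thesis using False by (intro exI[of _ "rev [1..<p]"]) auto
  qed
  then obtain L1 where L1: "Lst = L1 @ [zz]" "zz \<notin> set L1" by blast
  have "outer_seq n p q A = concat (map (\<lambda>k. replicate (ca k) k) L1) @ replicate (ca zz) zz"
    unfolding O_def' L1(1) by simp
  moreover have "zz \<notin> set (concat (map (\<lambda>k. replicate (ca k) k) L1))"
    unfolding set_concat_rep using L1(2) by auto
  ultimately show ?thesis by blast
qed

lemma N_first: "\<exists>N1. rev (map (refl_pos p q) (inner_seq n p q A)) = replicate (cb q) p @ N1 \<and> p \<notin> set N1"
proof -
  have "[p..<Suc q] = [p..<q] @ [q]" using pq by simp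
  then have "inner_seq n p q A = concat (map (\<lambda>i. replicate (cb i) i) [p..<q]) @ replicate (cb q) q"
    unfolding I_def' by simp
  then have "rev (map (refl_pos p q) (inner_seq n p q A)) =
     replicate (cb q) p @ rev (map (refl_pos p q) (concat (map (\<lambda>i. replicate (cb i) i) [p..<q])))"
    by (simp add: refl_pos_def)
  moreover have "p \<notin> set (rev (map (refl_pos p q) (concat (map (\<lambda>i. replicate (cb i) i) [p..<q]))))"
    unfolding set_rev set_map set_concat_rep by (auto simp: refl_pos_def)
  ultimately show ?thesis by blast
qed

lemma N_last: "\<exists>N2. rev (map (refl_pos p q) (inner_seq n p q A)) = N2 @ replicate (cb p) q \<and> q \<notin> set N2"
proof -
  have "[p..<Suc q] = p # [Suc p..<Suc q]" using pq by (simp add: upt_conv_Cons)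
  then have "inner_seq n p q A = replicate (cb p) p @ concat (map (\<lambda>i. replicate (cb i) i) [Suc p..<Suc q])"
    unfolding I_def' by simp
  then have "rev (map (refl_pos p q) (inner_seq n p q A)) =
     rev (map (refl_pos p q) (concat (map (\<lambda>i. replicate (cb i) i) [Suc p..<Suc q]))) @ replicate (cb p) q"
    by (simp add: refl_pos_def)
  moreover have "q \<notin> set (rev (map (refl_pos p q) (concat (map (\<lambda>i. replicate (cb i) i) [Suc p..<Suc q]))))"
    unfolding set_rev set_map set_concat_rep by (auto simp: refl_pos_def)
  ultimately show ?thesis by blast
qed

lemma C1: "actA n p q A (p - 1) p = min (ca (p - 1)) (cb q)"
proof -
  obtain O1 where o: "outer_seq n p q A = replicate (ca (p - 1)) (p - 1) @ O1" "p - 1 \<notin> set O1"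
    using O_first by blast
  obtain N1 where nn: "rev (map (refl_pos p q) (inner_seq n p q A)) = replicate (cb q) p @ N1" "p \<notin> set N1"
    using N_first by blast
  have "\<not> inside p q (p - 1)" "inside p q p" using p1 pq by (auto simp: inside_def)
  then have "actA n p q A (p - 1) p = cross_count n p q A (p - 1) p"
    by (simp add: actA_def)
  also have "\<dots> = min (ca (p - 1)) (cb q)"
    unfolding cross_count_def new_cross_def o(1) nn(1) by (rule cntZ1[OF o(2) nn(2)])
  finally show ?thesis .
qed

lemma C2: assumes "SYM A" shows "actA n p q A q zz = min (ca zz) (cb p)"
proof -
  obtain O2 where o: "outer_seq n p q A = O2 @ replicate (ca zz) zz" "zz \<notin> set O2"
    using O_last by blast
  obtain N2 where nn: "rev (map (refl_pos p q) (inner_seq n p q A)) = N2 @ replicate (cb p) q" "q \<notin> set N2"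
    using N_last by blast
  have l: "length (O2 @ replicate (ca zz) zz) = length (N2 @ replicate (cb p) q)"
    using len_ON[OF assms] o nn by simp
  have "\<not> inside p q zz" "inside p q q" using p1 pq by (auto simp: inside_def)
  then have "actA n p q A q zz = cross_count n p q A zz q"
    by (simp add: actA_def)
  also have "\<dots> = min (ca zz) (cb p)"
    unfolding cross_count_def new_cross_def o(1) nn(1) by (rule cntZ2[OF o(2) nn(2) l])
  finally show ?thesis .
qed

end


lemma Xc_all: "Xc u v x y \<Longrightarrow> Xc v u x y \<and> Xc u v y x \<and> Xc v u y x \<and> Xc x y u v \<and> Xc y x u v \<and> Xc x y v u \<and> Xc y x v u"
  by (meson Xc_sym1 Xc_sym2 Xc_sym3)

context
  fixes n p q :: nat and A :: "nat \<Rightarrow> nat \<Rightarrow> nat"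
  assumes p1: "1 \<le> p" and pq: "p < q" and qn: "q \<le> n" and sy: "SYM A" and nc: "NC A"
begin

abbreviation "NCr \<equiv> new_cross n p q A"
abbreviation "Os \<equiv> outer_seq n p q A"
abbreviation "Ns \<equiv> rev (map (refl_pos p q) (inner_seq n p q A))"

lemma W0: "(k, j) \<in> set NCr \<Longrightarrow> \<not> inside p q k \<and> k \<le> n \<and> inside p q j \<and> inside p q (refl_pos p q j)"
proof -
  assume a: "(k, j) \<in> set NCr"
  then have "k \<in> set Os" "j \<in> set Ns" unfolding new_cross_def by (auto dest: set_zip_leftD set_zip_rightD)
  from this(1) have "k \<in> set (rev [0..<p] @ rev [Suc q..<Suc n])"
    unfolding O_def'[OF p1 pq qn] set_concat_rep by blast
  then have k: "k < p \<or> (q < k \<and> k \<le> n)" by auto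
  from \<open>j \<in> set Ns\<close> obtain i where i: "i \<in> set (inner_seq n p q A)" "j = refl_pos p q i" by auto
  from i(1) have "i \<in> set [p..<Suc q]" unfolding I_def'[OF p1 pq qn] set_concat_rep by blast
  then have "p \<le> i" "i \<le> q" by auto
  then show ?thesis using k i(2) pq qn unfolding inside_def refl_pos_def by auto
qed

lemma W1: "(k, j) \<in> set NCr \<Longrightarrow> \<exists>i. inside p q i \<and> A k i \<noteq> 0"
proof -
  assume a: "(k, j) \<in> set NCr"
  then have "k \<in> set Os" unfolding new_cross_def by (auto dest: set_zip_leftD)
  then have "(\<Sum>i\<in>{p..q}. A k i) \<noteq> 0" unfolding O_def'[OF p1 pq qn] set_concat_rep by auto
  then obtain i where "i \<in> {p..q}" "A k i \<noteq> 0" using sum.neutral[of "{p..q}" "A k"] by metis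
  then show ?thesis by (auto simp: inside_def)
qed

lemma W2: "(k, j) \<in> set NCr \<Longrightarrow> \<exists>k'. \<not> inside p q k' \<and> A (refl_pos p q j) k' \<noteq> 0"
proof -
  assume a: "(k, j) \<in> set NCr"
  then have "j \<in> set Ns" unfolding new_cross_def by (auto dest: set_zip_rightD)
  then obtain i where i: "i \<in> set (inner_seq n p q A)" "j = refl_pos p q i" by auto
  then have i2: "i \<in> {p..q}" "(\<Sum>k\<in>{0..n} - {p..q}. A i k) \<noteq> 0"
    unfolding I_def'[OF p1 pq qn] set_concat_rep by auto
  then have "refl_pos p q j = i" using i(2) by (auto simp: refl_pos_def)
  moreover obtain k' where "k' \<in> {0..n} - {p..q}" "A i k' \<noteq> 0" using i2(2) sum.neutral[of "{0..n} - {p..q}" "A i"] by metis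
  ultimately show ?thesis by (auto simp: inside_def)
qed

lemma sortO: "sorted_wrt (\<lambda>a b. rk n p a \<le> rk n p b) Os"
proof -
  have "sorted_wrt (\<lambda>a b. rk n p a \<le> rk n p b) (rev [0..<p] @ rev [Suc q..<Suc n])"
    unfolding sorted_wrt_append sorted_wrt_rev
  proof (intro conjI)
    show "sorted_wrt (\<lambda>x y. rk n p y \<le> rk n p x) [0..<p]"
      by (rule sorted_wrt_mono_rel[OF _ sorted_wrt_upt]) (auto simp: rk_def)
    show "sorted_wrt (\<lambda>x y. rk n p y \<le> rk n p x) [Suc q..<Suc n]"
      by (rule sorted_wrt_mono_rel[OF _ sorted_wrt_upt]) (use pq in \<open>auto simp: rk_def\<close>)
    show "\<forall>x\<in>set (rev [0..<p]). \<forall>y\<in>set (rev [Suc q..<Suc n]). rk n p x \<le> rk n p y"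
      using pq by (auto simp: rk_def)
  qed
  then show ?thesis unfolding O_def'[OF p1 pq qn] by (rule sw_concat_rep[rotated]) simp
qed

lemma sortN: "sorted_wrt (\<le>) Ns"
proof -
  have "sorted_wrt (\<lambda>x y. refl_pos p q y \<le> refl_pos p q x) [p..<Suc q]"
    by (rule sorted_wrt_mono_rel[OF _ sorted_wrt_upt]) (auto simp: refl_pos_def)
  then have "sorted_wrt (\<lambda>x y. refl_pos p q y \<le> refl_pos p q x) (inner_seq n p q A)"
    unfolding I_def'[OF p1 pq qn] by (rule sw_concat_rep[rotated]) simp
  then show ?thesis by (simp add: sorted_wrt_rev sorted_wrt_map)
qed

lemma W3: assumes "(k, j) \<in> set NCr" "(k', j') \<in> set NCr" shows "\<not> Xc k j k' j'"
proof -
  have key: "\<not> Xc k j k' j'" if "(k, j) \<in> set NCr" "(k', j') \<in> set NCr"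
     "rk n p k \<le> rk n p k'" "j \<le> j'" for k j k' j'
    using W0[OF that(1)] W0[OF that(2)] AX5[OF p1 less_imp_le[OF pq] qn _ _ _ _ _ _ that(3,4)] by blast
  obtain m where m: "m < length NCr" "NCr ! m = (k, j)" using assms(1) by (auto simp: in_set_conv_nth)
  obtain m' where m': "m' < length NCr" "NCr ! m' = (k', j')" using assms(2) by (auto simp: in_set_conv_nth)
  have e: "Os ! m = k" "Ns ! m = j" "Os ! m' = k'" "Ns ! m' = j'" "m < length Os" "m < length Ns"
     "m' < length Os" "m' < length Ns"
    using m m' unfolding new_cross_def by auto
  have mono: "rk n p (Os ! a) \<le> rk n p (Os ! b) \<and> Ns ! a \<le> Ns ! b" if "a \<le> b" "b < length Os" "b < length Ns" for a b
  proof (cases "a = b")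
    case False
    then have "a < b" using that by simp
    then show ?thesis using sorted_wrt_nth_less[OF sortO] sorted_wrt_nth_less[OF sortN] that by blast
  qed simp
  show ?thesis
  proof (cases "m \<le> m'")
    case True
    then show ?thesis using mono[OF True] e key[OF assms] by simp
  next
    case False
    then have mm: "m' \<le> m" by simp
    show ?thesis using mono[OF mm] e key[OF assms(2,1)] Xc_sym3 by metis
  qed
qed

lemma cc_mem: "cross_count n p q A k i \<noteq> 0 \<Longrightarrow> (k, i) \<in> set NCr"
  unfolding cross_count_def by (auto simp: filter_empty_conv)

lemma arcT: "actA n p q A u v \<noteq> 0 \<Longrightarrow>
   (inside p q u \<and> inside p q v \<and> A (refl_pos p q u) (refl_pos p q v) \<noteq> 0) \<or>
   (\<not> inside p q u \<and> \<not> inside p q v \<and> A u v \<noteq> 0) \<or>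
   (\<not> inside p q u \<and> inside p q v \<and> (u, v) \<in> set NCr) \<or>
   (inside p q u \<and> \<not> inside p q v \<and> (v, u) \<in> set NCr)"
  by (cases "inside p q u"; cases "inside p q v") (simp_all add: actA_def cc_mem)

lemma P_II_II: assumes "inside p q u" "inside p q v" "inside p q x" "inside p q y"
  "A (refl_pos p q u) (refl_pos p q v) \<noteq> 0" "A (refl_pos p q x) (refl_pos p q y) \<noteq> 0" "Xc u v x y" shows False
proof -
  have "Xc (refl_pos p q u) (refl_pos p q v) (refl_pos p q x) (refl_pos p q y)"
    by (rule AX1[OF less_imp_le[OF pq] assms(1-4,7)])
  from NCX[OF sy nc this] assms(5,6) show False by simp
qed

lemma P_OO_OO: "A u v \<noteq> 0 \<Longrightarrow> A x y \<noteq> 0 \<Longrightarrow> Xc u v x y \<Longrightarrow> False"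
  using NCX[OF sy nc, of u v x y] by simp

lemma P_II_X: assumes "inside p q u" "inside p q v" "A (refl_pos p q u) (refl_pos p q v) \<noteq> 0"
  "(x, y) \<in> set NCr" "Xc u v x y" shows False
proof -
  have w: "\<not> inside p q x" "inside p q y" using W0[OF assms(4)] by auto
  obtain k' where k: "\<not> inside p q k'" "A (refl_pos p q y) k' \<noteq> 0" using W2[OF assms(4)] by blast
  have "Xc (refl_pos p q u) (refl_pos p q v) (refl_pos p q y) k'"
    by (rule AX3[OF assms(1,2) w k(1) assms(5)])
  from NCX[OF sy nc this] assms(3) k(2) show False by simp
qed

lemma P_OO_X: assumes "\<not> inside p q u" "\<not> inside p q v" "A u v \<noteq> 0"
  "(x, y) \<in> set NCr" "Xc u v x y" shows False
proof -
  have w: "\<not> inside p q x" "inside p q y" using W0[OF assms(4)] by auto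
  obtain i where i: "inside p q i" "A x i \<noteq> 0" using W1[OF assms(4)] by blast
  have "Xc u v x i" by (rule AX4[OF assms(1,2) w i(1) assms(5)])
  from NCX[OF sy nc this] assms(3) i(2) show False by simp
qed

lemma P_main: assumes "actA n p q A u v \<noteq> 0" "actA n p q A x y \<noteq> 0" "Xc u v x y" shows False
proof -
  note X = Xc_all[OF assms(3)] assms(3)
  have c1: "inside p q u \<and> inside p q v \<and> A (refl_pos p q u) (refl_pos p q v) \<noteq> 0 \<Longrightarrow> inside p q x \<and> inside p q y \<and> A (refl_pos p q x) (refl_pos p q y) \<noteq> 0 \<Longrightarrow> False"
    using P_II_II[of u v x y] X by blast
  have c2: "inside p q u \<and> inside p q v \<and> A (refl_pos p q u) (refl_pos p q v) \<noteq> 0 \<Longrightarrow> \<not> inside p q x \<and> \<not> inside p q y \<and> A x y \<noteq> 0 \<Longrightarrow> False"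
    using AX2[of p q u v x y] X by blast
  have c3: "inside p q u \<and> inside p q v \<and> A (refl_pos p q u) (refl_pos p q v) \<noteq> 0 \<Longrightarrow> \<not> inside p q x \<and> inside p q y \<and> (x, y) \<in> set NCr \<Longrightarrow> False"
    using P_II_X[of u v x y] X by blast
  have c4: "inside p q u \<and> inside p q v \<and> A (refl_pos p q u) (refl_pos p q v) \<noteq> 0 \<Longrightarrow> inside p q x \<and> \<not> inside p q y \<and> (y, x) \<in> set NCr \<Longrightarrow> False"
    using P_II_X[of u v y x] X by blast
  have c5: "\<not> inside p q u \<and> \<not> inside p q v \<and> A u v \<noteq> 0 \<Longrightarrow> inside p q x \<and> inside p q y \<and> A (refl_pos p q x) (refl_pos p q y) \<noteq> 0 \<Longrightarrow> False"
    using AX2[of p q x y u v] X by blast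
  have c6: "\<not> inside p q u \<and> \<not> inside p q v \<and> A u v \<noteq> 0 \<Longrightarrow> \<not> inside p q x \<and> \<not> inside p q y \<and> A x y \<noteq> 0 \<Longrightarrow> False"
    using P_OO_OO[of u v x y] X by blast
  have c7: "\<not> inside p q u \<and> \<not> inside p q v \<and> A u v \<noteq> 0 \<Longrightarrow> \<not> inside p q x \<and> inside p q y \<and> (x, y) \<in> set NCr \<Longrightarrow> False"
    using P_OO_X[of u v x y] X by blast
  have c8: "\<not> inside p q u \<and> \<not> inside p q v \<and> A u v \<noteq> 0 \<Longrightarrow> inside p q x \<and> \<not> inside p q y \<and> (y, x) \<in> set NCr \<Longrightarrow> False"
    using P_OO_X[of u v y x] X by blast
  have c9: "\<not> inside p q u \<and> inside p q v \<and> (u, v) \<in> set NCr \<Longrightarrow> inside p q x \<and> inside p q y \<and> A (refl_pos p q x) (refl_pos p q y) \<noteq> 0 \<Longrightarrow> False"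
    using P_II_X[of x y u v] X by blast
  have c10: "\<not> inside p q u \<and> inside p q v \<and> (u, v) \<in> set NCr \<Longrightarrow> \<not> inside p q x \<and> \<not> inside p q y \<and> A x y \<noteq> 0 \<Longrightarrow> False"
    using P_OO_X[of x y u v] X by blast
  have c11: "\<not> inside p q u \<and> inside p q v \<and> (u, v) \<in> set NCr \<Longrightarrow> \<not> inside p q x \<and> inside p q y \<and> (x, y) \<in> set NCr \<Longrightarrow> False"
    using W3[of u v x y] X by blast
  have c12: "\<not> inside p q u \<and> inside p q v \<and> (u, v) \<in> set NCr \<Longrightarrow> inside p q x \<and> \<not> inside p q y \<and> (y, x) \<in> set NCr \<Longrightarrow> False"
    using W3[of u v y x] X by blast
  have c13: "inside p q u \<and> \<not> inside p q v \<and> (v, u) \<in> set NCr \<Longrightarrow> inside p q x \<and> inside p q y \<and> A (refl_pos p q x) (refl_pos p q y) \<noteq> 0 \<Longrightarrow> False"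
    using P_II_X[of x y v u] X by blast
  have c14: "inside p q u \<and> \<not> inside p q v \<and> (v, u) \<in> set NCr \<Longrightarrow> \<not> inside p q x \<and> \<not> inside p q y \<and> A x y \<noteq> 0 \<Longrightarrow> False"
    using P_OO_X[of x y v u] X by blast
  have c15: "inside p q u \<and> \<not> inside p q v \<and> (v, u) \<in> set NCr \<Longrightarrow> \<not> inside p q x \<and> inside p q y \<and> (x, y) \<in> set NCr \<Longrightarrow> False"
    using W3[of v u x y] X by blast
  have c16: "inside p q u \<and> \<not> inside p q v \<and> (v, u) \<in> set NCr \<Longrightarrow> inside p q x \<and> \<not> inside p q y \<and> (y, x) \<in> set NCr \<Longrightarrow> False"
    using W3[of v u y x] X by blast
  show False using arcT[OF assms(1)] arcT[OF assms(2)] c1 c2 c3 c4 c5 c6 c7 c8 c9 c10 c11 c12 c13 c14 c15 c16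
    by argo
qed

lemma NC_act: "NC (actA n p q A)"
  unfolding NC_def
proof (intro allI impI)
  fix a b c d :: nat assume "a < b \<and> b < c \<and> c < d"
  then have "Xc a c b d" unfolding Xc_def by simp
  then show "actA n p q A a c = 0 \<or> actA n p q A b d = 0" using P_main by blast
qed

lemma SYM_act: "SYM (actA n p q A)"
  using sy unfolding SYM_def actA_def by auto

end


definition nxt :: "nat \<Rightarrow> nat \<Rightarrow> nat" where "nxt n i = (if i < n then Suc i else 0)"
definition btA :: "nat \<Rightarrow> (nat \<Rightarrow> nat \<Rightarrow> nat) \<Rightarrow> nat" where
  "btA n A = Min ((\<lambda>i. A i (nxt n i)) ` {0..n})"

lemma bt_eq: "border_thickness n x = btA n (snd x)"
proof -
  obtain s A where x: "x = (s, A)" by (cases x)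
  have "{A i (Suc i) | i. i < n} \<union> {A n 0} = (\<lambda>i. A i (nxt n i)) ` {0..n}"
  proof
    show "{A i (Suc i) | i. i < n} \<union> {A n 0} \<subseteq> (\<lambda>i. A i (nxt n i)) ` {0..n}"
    proof
      fix y assume "y \<in> {A i (Suc i) | i. i < n} \<union> {A n 0}"
      then show "y \<in> (\<lambda>i. A i (nxt n i)) ` {0..n}"
      proof
        assume "y \<in> {A i (Suc i) | i. i < n}"
        then obtain i where "i < n" "y = A i (Suc i)" by blast
        then show ?thesis by (intro image_eqI[of _ _ i]) (auto simp: nxt_def)
      next
        assume "y \<in> {A n 0}"
        then show ?thesis by (intro image_eqI[of _ _ n]) (auto simp: nxt_def)
      qed
    qed
    show "(\<lambda>i. A i (nxt n i)) ` {0..n} \<subseteq> {A i (Suc i) | i. i < n} \<union> {A n 0}"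
      by (auto simp: nxt_def)
  qed
  then show ?thesis by (simp add: x border_thickness_def btA_def)
qed

lemma sum1: "finite S \<Longrightarrow> a \<in> S \<Longrightarrow> (\<And>k. k \<in> S \<Longrightarrow> k \<noteq> a \<Longrightarrow> f k = 0) \<Longrightarrow> sum f S = (f a :: nat)"
proof -
  assume a: "finite S" "a \<in> S" "\<And>k. k \<in> S \<Longrightarrow> k \<noteq> a \<Longrightarrow> f k = 0"
  have "sum f S = f a + sum f (S - {a})" by (rule sum.remove[OF a(1,2)])
  also have "sum f (S - {a}) = 0" by (rule sum.neutral) (use a(3) in auto)
  finally show ?thesis by simp
qed

context
  fixes n p q :: nat and A :: "nat \<Rightarrow> nat \<Rightarrow> nat"
  assumes p1: "1 \<le> p" and pq: "p < q" and qn: "q \<le> n" and sy: "SYM A" and nc: "NC A"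
begin

abbreviation "TT \<equiv> Min ((\<lambda>i. A i (nxt n i)) ` {0..n})"

lemma TL: "i \<le> n \<Longrightarrow> TT \<le> A i (nxt n i)"
  by (rule Min_le) auto

lemma symA: "A i j = A j i" using sy by (simp add: SYM_def)

lemma nxt_q: "nxt n q = (if q < n then Suc q else 0)" by (simp add: nxt_def)
lemma nxt_pm: "nxt n (p - 1) = p" using p1 pq qn by (simp add: nxt_def)

lemma zz_out: "(if q < n then Suc q else 0) \<in> {0..n} - {p..q}" using p1 qn by auto
lemma pm_out: "p - 1 \<in> {0..n} - {p..q}" using p1 pq qn by auto

lemma cb_q_ge: "TT \<le> (\<Sum>k\<in>{0..n} - {p..q}. A q k)"
proof -
  have "A q (nxt n q) \<le> (\<Sum>k\<in>{0..n} - {p..q}. A q k)"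
    unfolding nxt_q by (rule member_le_sum[OF zz_out]) auto
  then show ?thesis using TL[OF qn] by simp
qed
lemma cb_p_ge: "TT \<le> (\<Sum>k\<in>{0..n} - {p..q}. A p k)"
proof -
  have "A p (p - 1) \<le> (\<Sum>k\<in>{0..n} - {p..q}. A p k)"
    by (rule member_le_sum[OF pm_out]) auto
  moreover have "TT \<le> A (p - 1) (nxt n (p - 1))" by (rule TL) (use pq qn in simp)
  ultimately show ?thesis using nxt_pm symA[of p "p - 1"] by simp
qed
lemma ca_pm_ge: "TT \<le> (\<Sum>i\<in>{p..q}. A (p - 1) i)"
proof -
  have "A (p - 1) p \<le> (\<Sum>i\<in>{p..q}. A (p - 1) i)"
    by (rule member_le_sum) (use pq in auto)
  moreover have "TT \<le> A (p - 1) (nxt n (p - 1))" by (rule TL) (use pq qn in simp)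
  ultimately show ?thesis using nxt_pm by simp
qed
lemma ca_zz_ge: "TT \<le> (\<Sum>i\<in>{p..q}. A (if q < n then Suc q else 0) i)"
proof -
  have "A (if q < n then Suc q else 0) q \<le> (\<Sum>i\<in>{p..q}. A (if q < n then Suc q else 0) i)"
    by (rule member_le_sum) (use pq in auto)
  then show ?thesis using TL[OF qn] nxt_q symA[of q "if q < n then Suc q else 0"] by simp
qed

lemma lower: "i \<le> n \<Longrightarrow> TT \<le> actA n p q A i (nxt n i)"
proof -
  assume i: "i \<le> n"
  consider "inside p q i" "inside p q (nxt n i)" | "\<not> inside p q i" "\<not> inside p q (nxt n i)"
    | "\<not> inside p q i" "inside p q (nxt n i)" | "inside p q i" "\<not> inside p q (nxt n i)" by blast
  then show ?thesis
  proof cases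
    case 1
    then have ni: "nxt n i = Suc i" "i < n" "p \<le> i" "Suc i \<le> q" using p1 by (auto simp: nxt_def inside_def split: if_splits)
    define j where "j = p + q - Suc i"
    have j: "refl_pos p q i = Suc j" "refl_pos p q (Suc i) = j" "j < n" "nxt n j = Suc j"
      using ni qn by (auto simp: j_def refl_pos_def nxt_def)
    have "actA n p q A i (nxt n i) = A (Suc j) j" using 1 j ni(1) by (simp add: actA_def)
    also have "\<dots> = A j (nxt n j)" using j symA by simp
    finally show ?thesis using TL[of j] j by simp
  next
    case 2
    then show ?thesis using TL[OF i] by (simp add: actA_def)
  next
    case 3
    then have "i = p - 1" using p1 by (auto simp: nxt_def inside_def split: if_splits)
    then show ?thesis using C1[OF p1 pq qn, of A] cb_q_ge ca_pm_ge nxt_pm by simp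
  next
    case 4
    then have "i = q" using p1 i qn by (auto simp: nxt_def inside_def split: if_splits)
    then show ?thesis using C2[OF p1 pq qn sy] cb_p_ge ca_zz_ge nxt_q by simp
  qed
qed

lemma upper: "\<exists>i\<le>n. actA n p q A i (nxt n i) \<le> TT"
proof -
  have "TT \<in> (\<lambda>i. A i (nxt n i)) ` {0..n}" by (rule Min_in) auto
  then obtain i0 where "i0 \<in> {0..n}" "TT = A i0 (nxt n i0)" by (rule imageE)
  then have i0: "i0 \<le> n" "A i0 (nxt n i0) = TT" by auto
  consider "inside p q i0" "inside p q (nxt n i0)" | "\<not> inside p q i0" "\<not> inside p q (nxt n i0)"
    | "\<not> inside p q i0" "inside p q (nxt n i0)" | "inside p q i0" "\<not> inside p q (nxt n i0)" by blast
  then show ?thesis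
  proof cases
    case 1
    then have ni: "nxt n i0 = Suc i0" "i0 < n" "p \<le> i0" "Suc i0 \<le> q" using p1 by (auto simp: nxt_def inside_def split: if_splits)
    define j where "j = p + q - Suc i0"
    have j: "refl_pos p q j = Suc i0" "refl_pos p q (Suc j) = i0" "j \<le> n" "nxt n j = Suc j"
      "inside p q j" "inside p q (Suc j)"
      using ni qn by (auto simp: j_def refl_pos_def nxt_def inside_def)
    have "actA n p q A j (nxt n j) = A (Suc i0) i0" using j by (simp add: actA_def)
    also have "\<dots> = TT" using i0 ni symA by simp
    finally show ?thesis using j by auto
  next
    case 2
    then show ?thesis using i0 by (intro exI[of _ i0]) (simp add: actA_def)
  next
    case 3
    then have ip: "i0 = p - 1" using p1 by (auto simp: nxt_def inside_def split: if_splits)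
    then have T: "TT = A (p - 1) p" using i0 nxt_pm by simp
    show ?thesis
    proof (cases "\<exists>i. p < i \<and> i \<le> q \<and> A (p - 1) i \<noteq> 0")
      case True
      then obtain i where i: "p < i" "i \<le> q" "A (p - 1) i \<noteq> 0" by blast
      have "(\<Sum>k\<in>{0..n} - {p..q}. A p k) = A p (p - 1)"
      proof (rule sum1)
        fix k assume k: "k \<in> {0..n} - {p..q}" "k \<noteq> p - 1"
        then have xc: "Xc (p - 1) i p k" using AX6[OF p1 i(1,2)] by (auto simp: inside_def)
        show "A p k = 0" using NCX[OF sy nc xc] i(3) by simp
      qed (use pm_out in auto)
      then have "actA n p q A q (nxt n q) \<le> TT"
        using C2[OF p1 pq qn sy] T nxt_q symA[of p "p - 1"] by simp
      then show ?thesis using qn by blast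
    next
      case False
      have "(\<Sum>i\<in>{p..q}. A (p - 1) i) = A (p - 1) p"
        by (rule sum1) (use False pq in auto)
      then have "actA n p q A (p - 1) (nxt n (p - 1)) \<le> TT"
        using C1[OF p1 pq qn, of A] T nxt_pm by simp
      then show ?thesis using qn pq by (intro exI[of _ "p - 1"]) auto
    qed
  next
    case 4
    then have iq: "i0 = q" using p1 i0 qn by (auto simp: nxt_def inside_def split: if_splits)
    then have T: "TT = A q (if q < n then Suc q else 0)" using i0 nxt_q by simp
    show ?thesis
    proof (cases "\<exists>i. p \<le> i \<and> i < q \<and> A (if q < n then Suc q else 0) i \<noteq> 0")
      case True
      then obtain i where i: "p \<le> i" "i < q" "A (if q < n then Suc q else 0) i \<noteq> 0" by blast
      have "(\<Sum>k\<in>{0..n} - {p..q}. A q k) = A q (if q < n then Suc q else 0)"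
      proof (rule sum1)
        fix k assume k: "k \<in> {0..n} - {p..q}" "k \<noteq> (if q < n then Suc q else 0)"
        then have xc: "Xc (if q < n then Suc q else 0) i q k" using AX7[OF p1 i(1,2) qn] by (auto simp: inside_def)
        show "A q k = 0" using NCX[OF sy nc xc] i(3) by simp
      qed (use zz_out in auto)
      then have "actA n p q A (p - 1) (nxt n (p - 1)) \<le> TT"
        using C1[OF p1 pq qn, of A] T nxt_pm by simp
      then show ?thesis using qn pq by (intro exI[of _ "p - 1"]) auto
    next
      case False
      have "(\<Sum>i\<in>{p..q}. A (if q < n then Suc q else 0) i) = A (if q < n then Suc q else 0) q"
        by (rule sum1) (use False pq in auto)
      then have "actA n p q A q (nxt n q) \<le> TT"
        using C2[OF p1 pq qn sy] T nxt_q symA[of q "if q < n then Suc q else 0"] by simp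
      then show ?thesis using qn by blast
    qed
  qed
qed

lemma bt_step: "btA n (actA n p q A) = btA n A"
proof (rule antisym)
  obtain i where i: "i \<le> n" "actA n p q A i (nxt n i) \<le> TT" using upper by blast
  have "btA n (actA n p q A) \<le> actA n p q A i (nxt n i)"
    unfolding btA_def by (rule Min_le) (use i in auto)
  then have "btA n (actA n p q A) \<le> TT" using i(2) by (rule order_trans)
  then show "btA n (actA n p q A) \<le> btA n A" by (simp only: btA_def)
  show "btA n A \<le> btA n (actA n p q A)"
    unfolding btA_def by (rule Min.boundedI) (auto intro: lower)
qed

end

lemma inv_word: "SYM (snd x) \<Longrightarrow> NC (snd x) \<Longrightarrow> cactus_word n ws \<Longrightarrow>
  SYM (snd (act_word n ws x)) \<and> NC (snd (act_word n ws x)) \<and> btA n (snd (act_word n ws x)) = btA n (snd x)"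
proof (induction ws)
  case Nil then show ?case by (simp add: act_word_def)
next
  case (Cons w ws)
  obtain p q where w: "w = (p, q)" by (cases w)
  have c: "1 \<le> p" "p < q" "q \<le> n" "cactus_word n ws" using Cons.prems(3) w by (auto simp: cactus_word_def)
  have IH: "SYM (snd (act_word n ws x)) \<and> NC (snd (act_word n ws x)) \<and> btA n (snd (act_word n ws x)) = btA n (snd x)"
    using Cons.IH Cons.prems(1,2) c(4) by blast
  have e: "snd (act_word n (w # ws) x) = actA n p q (snd (act_word n ws x))"
    by (simp add: act_word_def w act_s_snd)
  show ?case unfolding e
    using SYM_act[OF c(1-3)] NC_act[OF c(1-3)] bt_step[OF c(1-3)] IH by simp
qed

theorem mainTheorem4:
  fixes n linf :: nat and l :: "nat \<Rightarrow> nat" and x :: diagram and ws :: "(nat \<times> nat) list"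
  assumes "x \<in> arc_diagrams n l linf"
    and "cactus_word n ws"
  shows "border_thickness n (act_word n ws x) = border_thickness n x"
proof -
  obtain s A where x: "x = (s, A)" by (cases x)
  have h: "(\<forall>i j. A i j = A j i) \<and> (\<forall>a b c d. a < b \<and> b < c \<and> c < d \<longrightarrow> A a c = 0 \<or> A b d = 0)"
    using assms(1) unfolding x arc_diagrams_def mem_Collect_eq case_prod_conv
    by (elim conjE) (intro conjI; assumption)
  have "SYM (snd x)" "NC (snd x)" using h unfolding x SYM_def NC_def by simp_all
  then show ?thesis using inv_word[OF _ _ assms(2)] by (simp add: bt_eq)
qed

end
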